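(* Let $p$ be an odd prime, $\Gamma=\Gamma_0(N)$, $\mathcal O$ the ring of integers of a finite extension of $\mathbb Q_p$, $g\ge0$, and $\varphi\in H^1_c(\Gamma,V_g(\mathcal O))$. Then for every $n\ge1$ and $0\le i\le p-2$, $$\theta_{n,i}\Big(\varphi\big|\begin{pmatrix}p&0\\0&1\end{pmatrix}\Big)=p^g\cdot\nu^n_{n-1}\big(\theta_{n-1,i}(\varphi)\big).$$
   Context: $V_g(R)$: homogeneous degree-$g$ polynomials in $X,Y$ over $R$ with right action $(P|\gamma)(X,Y)=P(dX-cY,-bX+aY)$ for $\gamma=\begin{pmatrix}a&b\\c&d\end{pmatrix}$. $H^1_c(\Gamma',V_g(R))$ is identified with additive maps $\varphi:\mathrm{Div}^0(\mathbb P^1(\mathbb Q))\to V_g(R)$ with $\varphi(\gamma D)|\gamma=\varphi(D)$ for $\gamma\in\Gamma'$. For an integer matrix $\delta$ with positive determinant, $(\varphi|\delta)(D)=\varphi(\delta D)|\delta$ ($\delta$ acting on $\mathbb P^1(\mathbb Q)$ by Möbius transformations); $\varphi|\mathrm{diag}(p,1)$ is a modular symbol of level $\Gamma_0(Np)$. For $n\ge0$, $\mathcal G_n=\mathrm{Gal}(\mathbb Q(\mu_{p^n})/\mathbb Q)\cong(\mathbb Z/p^n)^\times$, $\sigma_a\leftrightarrow a$, $\vartheta_n(\varphi)=\sum_{a\in(\mathbb Z/p^n)^\times}\varphi(\{\infty\}-\{a/p^n\})|_{(X,Y)=(0,1)}\sigma_a$; with $\mathcal G_{n+1}\cong G_n\times(\mathbb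 Z/p)^\times$, $G_n$ cyclic of order $p^n$, $\omega$ Teichmüller, $\theta_{n,i}(\varphi)$ is the image of $\vartheta_{n+1}(\varphi)$ in $\mathcal O[G_n]$ under $(\tau,x)\mapsto\omega(x)^i\tau$. $\nu^n_{n-1}:\mathcal O[G_{n-1}]\to\mathcal O[G_n]$, $\sigma\mapsto\sum_{\tau\mapsto\sigma}\tau$. *)

theory Defs
  imports "HOL-Computational_Algebra.Polynomial" "HOL-Number_Theory.Cong"
begin

datatype cusp = Infty | Fin rat

text \<open>An integer 2x2 matrix (a,b,c,d) stands for [[a,b],[c,d]].\<close>
type_synonym imat = "int \<times> int \<times> int \<times> int"

fun moeb :: "imat \<Rightarrow> cusp \<Rightarrow> cusp" where
  "moeb (a,b,c,d) Infty = (if c = 0 then Infty else Fin (of_int a / of_int c))"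
| "moeb (a,b,c,d) (Fin r) =
     (if of_int c * r + of_int d = 0 then Infty
      else Fin ((of_int a * r + of_int b) / (of_int c * r + of_int d)))"

definition Gamma0 :: "nat \<Rightarrow> imat set" where
  "Gamma0 N = {(a,b,c,d). a * d - b * c = 1 \<and> int N dvd c}"

text \<open>Divisors are finitely supported integer-valued functions on cusps.\<close>
definition is_div0 :: "(cusp \<Rightarrow> int) \<Rightarrow> bool" where
  "is_div0 D \<longleftrightarrow> finite {x. D x \<noteq> 0} \<and> (\<Sum>x\<in>{x. D x \<noteq> 0}. D x) = 0"

definition dpush :: "imat \<Rightarrow> (cusp \<Rightarrow> int) \<Rightarrow> (cusp \<Rightarrow> int)" where
  "dpush \<gamma> D = (\<lambda>x. \<Sum>y\<in>{y. D y \<noteq> 0 \<and> moeb \<gamma> y = x}. D y)"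

definition dv :: "cusp \<Rightarrow> cusp \<Rightarrow> (cusp \<Rightarrow> int)" where
  "dv r s = (\<lambda>x. (if x = r then 1 else 0) - (if x = s then 1 else 0))"

text \<open>A homogeneous polynomial P(X,Y) = sum_j f_j X^j Y^(g-j) of degree g is encoded by
  its dehomogenisation f(t) = P(t,1), a univariate polynomial of degree at most g.
  The right action (P|gamma)(X,Y) = P(dX-cY, -bX+aY) becomes
  sum_j f_j (d t - c)^j (a - b t)^(g-j).\<close>
definition vact :: "nat \<Rightarrow> imat \<Rightarrow> 'a::comm_ring_1 poly \<Rightarrow> 'a poly" where
  "vact g \<gamma> f = (case \<gamma> of (a,b,c,d) \<Rightarrow>
     (\<Sum>j\<le>g. smult (coeff f j) ([:- of_int c, of_int d:] ^ j * [:of_int a, - of_int b:] ^ (g - j))))"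

text \<open>Evaluation at (X,Y) = (0,1) is P(0,1) = f(0).\<close>
definition ev01 :: "'a::comm_ring_1 poly \<Rightarrow> 'a" where
  "ev01 f = poly f 0"

definition modsym :: "nat \<Rightarrow> nat \<Rightarrow> ((cusp \<Rightarrow> int) \<Rightarrow> 'a::comm_ring_1 poly) \<Rightarrow> bool" where
  "modsym N g \<phi> \<longleftrightarrow>
     (\<forall>D. is_div0 D \<longrightarrow> degree (\<phi> D) \<le> g) \<and>
     (\<forall>D1 D2. is_div0 D1 \<longrightarrow> is_div0 D2 \<longrightarrow> \<phi> (\<lambda>x. D1 x + D2 x) = \<phi> D1 + \<phi> D2) \<and>
     (\<forall>\<gamma>\<in>Gamma0 N. \<forall>D. is_div0 D \<longrightarrow> vact g \<gamma> (\<phi> (dpush \<gamma> D)) = \<phi> D)"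

definition mslash :: "nat \<Rightarrow> imat \<Rightarrow> ((cusp \<Rightarrow> int) \<Rightarrow> 'a::comm_ring_1 poly)
                        \<Rightarrow> ((cusp \<Rightarrow> int) \<Rightarrow> 'a poly)" where
  "mslash g \<delta> \<phi> = (\<lambda>D. vact g \<delta> (\<phi> (dpush \<delta> D)))"

text \<open>Elements of R[(Z/p^n)^x] and R[G_n] are coefficient functions on residues (nat \<Rightarrow> R),
  the residue a standing for sigma_a.  G_n is realised as the subgroup
  {t mod p^(n+1) | t = 1 mod p} of (Z/p^(n+1))^x = Gal(Q(mu_(p^(n+1)))/Q(mu_p)).\<close>

definition vartheta :: "nat \<Rightarrow> nat \<Rightarrow> ((cusp \<Rightarrow> int) \<Rightarrow> 'a::comm_ring_1 poly) \<Rightarrow> nat \<Rightarrow> 'a" where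
  "vartheta p n \<phi> a =
     (if a < p ^ n \<and> coprime a (p ^ n)
      then ev01 (\<phi> (dv Infty (Fin (of_nat a / of_nat (p ^ n))))) else 0)"

text \<open>Projection of (Z/p^(n+1))^x = G_n x mu_(p-1) onto G_n (the canonical splitting,
  mu_(p-1) being identified with (Z/p)^x by reduction mod p).\<close>
definition gproj :: "nat \<Rightarrow> nat \<Rightarrow> nat \<Rightarrow> nat" where
  "gproj p n a = (THE t. t < p ^ (n + 1) \<and> t mod p = 1 \<and>
      (\<exists>u. [u ^ (p - 1) = 1] (mod p ^ (n + 1)) \<and> [t * u = a] (mod p ^ (n + 1))))"

definition theta :: "nat \<Rightarrow> nat \<Rightarrow> nat \<Rightarrow> (nat \<Rightarrow> 'a::comm_ring_1)
                      \<Rightarrow> ((cusp \<Rightarrow> int) \<Rightarrow> 'a poly) \<Rightarrow> nat \<Rightarrow> 'a" where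
  "theta p n i \<omega> \<phi> = (\<lambda>t.
     \<Sum>a\<in>{a. a < p ^ (n + 1) \<and> coprime a (p ^ (n + 1)) \<and> gproj p n a = t}.
        vartheta p (n + 1) \<phi> a * \<omega> (a mod p) ^ i)"

text \<open>nu^n_(n-1) : R[G_(n-1)] \<rightarrow> R[G_n], sigma \<mapsto> sum of its preimages under reduction mod p^n.\<close>
definition nu :: "nat \<Rightarrow> nat \<Rightarrow> (nat \<Rightarrow> 'a::comm_ring_1) \<Rightarrow> nat \<Rightarrow> 'a" where
  "nu p n F = (\<lambda>t. if t < p ^ (n + 1) \<and> t mod p = 1 then F (t mod p ^ n) else 0)"

text \<open>Defining properties of the Teichmueller character (Z/p)^x \<rightarrow> R^x
  (in the ring of integers O these determine it uniquely).\<close>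
definition teichmueller :: "nat \<Rightarrow> (nat \<Rightarrow> 'a::comm_ring_1) \<Rightarrow> bool" where
  "teichmueller p \<omega> \<longleftrightarrow>
     (\<forall>x\<in>{1..<p}. \<omega> x ^ (p - 1) = 1 \<and> (\<exists>r. \<omega> x = of_nat x + of_nat p * r)) \<and>
     (\<forall>x\<in>{1..<p}. \<forall>y\<in>{1..<p}. \<omega> ((x * y) mod p) = \<omega> x * \<omega> y)"

end

theory Submission
  imports Defs "HOL-Number_Theory.Number_Theory"
begin


lemma lift_step_int:
  fixes X Y :: int and p :: nat
  assumes "[X = Y] (mod int p ^ (j+1))" "p > 0"
  shows "[X ^ p = Y ^ p] (mod int p ^ (j+2))"
proof -
  have d1: "int p ^ (j+1) dvd X - Y" using assms(1) by (simp add: cong_iff_dvd_diff dvd_diff_commute)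
  have "[X = Y] (mod int p)" using assms(1) by (rule cong_dvd_modulus) simp
  hence "[(\<Sum>i<p. Y^(p - Suc i) * X^i) = (\<Sum>i<p. Y^(p - Suc i) * Y^i)] (mod int p)"
    by (intro cong_sum cong_mult cong_pow cong_refl) auto
  moreover have "(\<Sum>i<p. Y^(p - Suc i) * Y^i) = (\<Sum>i<p. Y^(p - 1))"
    by (intro sum.cong refl) (simp add: power_add[symmetric])
  moreover have "(\<Sum>i<p. Y^(p - 1)) = int p * Y^(p-1)" by simp
  ultimately have "int p dvd (\<Sum>i<p. Y^(p - Suc i) * X^i)"
    by (metis cong_0_iff cong_mult_self_left cong_trans)
  with d1 have "int p ^ (j+1) * int p dvd (X - Y) * (\<Sum>i<p. Y^(p - Suc i) * X^i)"
    by (rule mult_dvd_mono)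
  hence "int p ^ (j+2) dvd X^p - Y^p" by (simp add: power_diff_sumr2 ac_simps)
  thus ?thesis by (simp add: cong_iff_dvd_diff dvd_diff_commute)
qed

lemma lift_nat:
  fixes x y p :: nat
  assumes "[x = y] (mod p)" "p > 0"
  shows "[x ^ (p^j) = y ^ (p^j)] (mod p^(j+1))"
proof (induction j)
  case 0 then show ?case using assms by simp
next
  case (Suc j)
  hence "[int x ^ (p^j) = int y ^ (p^j)] (mod int p ^ (j+1))"
    by (metis cong_int_iff of_nat_power)
  hence "[(int x ^ (p^j))^p = (int y ^ (p^j))^p] (mod int p ^ (j+2))"
    using assms(2) by (rule lift_step_int)
  hence "[int (x ^ (p^Suc j)) = int (y ^ (p^Suc j))] (mod int (p ^ (Suc j+1)))"
    by (simp add: power_mult[symmetric] mult.commute)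
  thus ?case by (simp only: cong_int_iff)
qed

lemma teich_fix:
  fixes u p k :: nat
  assumes "[u^(p-1) = 1] (mod k)" "p > 0"
  shows "[u^(p^j) = u] (mod k)"
proof (induction j)
  case 0 then show ?case by simp
next
  case (Suc j)
  have "u^(p^Suc j) = (u^(p^j))^p" by (simp add: power_mult[symmetric] mult.commute)
  also have "[\<dots> = u^p] (mod k)" using Suc by (rule cong_pow)
  also have "u^p = u * u^(p-1)" using assms(2) by (metis power_Suc Suc_diff_1)
  also have "[\<dots> = u * 1] (mod k)" using assms(1) by (intro cong_mult cong_refl)
  finally show ?case by simp
qed

lemma teich_unique:
  fixes u v p k :: nat
  assumes "k \<ge> 1" "[u^(p-1) = 1] (mod p^k)" "[v^(p-1) = 1] (mod p^k)" "[u = v] (mod p)" "p > 0"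
  shows "[u = v] (mod p^k)"
proof -
  have "[u^(p^(k-1)) = v^(p^(k-1))] (mod p^(k-1+1))" using lift_nat assms by blast
  hence "[u^(p^(k-1)) = v^(p^(k-1))] (mod p^k)" using assms(1) by simp
  moreover have "[u^(p^(k-1)) = u] (mod p^k)" "[v^(p^(k-1)) = v] (mod p^k)"
    using teich_fix assms by blast+
  ultimately show ?thesis by (meson cong_sym cong_trans)
qed

lemma teich_exists:
  fixes a p k :: nat
  assumes "prime p" "\<not> p dvd a" "k \<ge> 1"
  shows "[(a^(p^(k-1)))^(p-1) = 1] (mod p^k)" "[a^(p^(k-1)) = a] (mod p)"
proof -
  have "coprime a (p^k)" using assms prime_imp_coprime[of p a]
    by (simp add: ac_simps)
  hence "[a ^ totient (p^k) = 1] (mod p^k)" by (rule euler_theorem)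
  thus "[(a^(p^(k-1)))^(p-1) = 1] (mod p^k)"
    using totient_prime_power[of p k] assms by (simp add: power_mult)
  have "[a^(p-1) = 1] (mod p)" using fermat_theorem assms by blast
  thus "[a^(p^(k-1)) = a] (mod p)" using teich_fix assms prime_gt_0_nat by blast
qed

definition Pg :: "nat \<Rightarrow> nat \<Rightarrow> nat \<Rightarrow> nat \<Rightarrow> bool" where
  "Pg p m a t \<longleftrightarrow> t < p ^ (m + 1) \<and> t mod p = 1 \<and>
      (\<exists>u. [u ^ (p - 1) = 1] (mod p ^ (m + 1)) \<and> [t * u = a] (mod p ^ (m + 1)))"

lemma Pg_u_cong:
  fixes t u a p m :: nat
  assumes "[t*u = a] (mod p ^ (m + 1))" "t mod p = 1"
  shows "[u = a] (mod p)"
proof -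
  have "p dvd p ^ (m + 1)" by simp
  hence "[t*u = a] (mod p)" using assms(1) cong_dvd_modulus_nat by blast
  moreover have "[t*u = 1*u] (mod p)" using assms(2)
    by (intro cong_mult cong_refl) (cases "p = 1"; simp add: cong_def)
  ultimately show ?thesis by (metis cong_sym cong_trans mult_1)
qed

lemma Pg_exists:
  assumes "prime p" "\<not> p dvd a"
  shows "\<exists>t. Pg p m a t"
proof -
  define M where "M = p ^ (m+1)"
  define u where "u = a^(p^m)"
  have p2: "p \<ge> 2" using assms prime_ge_2_nat by blast
  have u1: "[u^(p-1) = 1] (mod M)" "[u = a] (mod p)"
    using teich_exists[of p a "m+1"] assms unfolding M_def u_def by auto
  define t where "t = (a * u^(p-2)) mod M"
  have pM: "p dvd M" unfolding M_def by simp
  have "t < M" unfolding t_def M_def using p2 by simp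
  moreover have "t mod p = 1"
  proof -
    have "t mod p = (a * u^(p-2)) mod p" unfolding t_def using pM by (simp add: mod_mod_cancel)
    also have "[a * u^(p-2) = a * a^(p-2)] (mod p)" using u1 by (intro cong_mult cong_pow cong_refl)
    hence "(a * u^(p-2)) mod p = (a * a^(p-2)) mod p" by (simp add: cong_def)
    also have "a * a^(p-2) = a^(p-1)" using p2 by (metis power_Suc Suc_diff_Suc Suc_1 less_le_trans lessI numeral_2_eq_2 diff_Suc_Suc)
    also have "a^(p-1) mod p = 1" using fermat_theorem[OF assms] p2 by (simp add: cong_def)
    finally show ?thesis .
  qed
  moreover have "[t * u = a] (mod M)"
  proof -
    have "[t * u = a * u^(p-2) * u] (mod M)" unfolding t_def by (simp add: cong_def mod_mult_left_eq)
    also have "a * u^(p-2) * u = a * u^(p-1)" using p2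
      by (metis mult.assoc power_Suc2 Suc_diff_Suc Suc_1 less_le_trans lessI numeral_2_eq_2 diff_Suc_Suc)
    also have "[\<dots> = a * 1] (mod M)" using u1 by (intro cong_mult cong_refl)
    finally show ?thesis by simp
  qed
  ultimately show ?thesis unfolding Pg_def M_def using u1 M_def by blast
qed

lemma Pg_unique:
  assumes "prime p" "Pg p m a t" "Pg p m a t'"
  shows "t = t'"
proof -
  define M where "M = p ^ (m+1)"
  have p2: "p \<ge> 2" using assms prime_ge_2_nat by blast
  obtain u where u: "[u ^ (p - 1) = 1] (mod M)" "[t * u = a] (mod M)" "t mod p = 1" "t < M"
    using assms(2) unfolding Pg_def M_def by blast
  obtain u' where u': "[u' ^ (p - 1) = 1] (mod M)" "[t' * u' = a] (mod M)" "t' mod p = 1" "t' < M"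
    using assms(3) unfolding Pg_def M_def by blast
  have "[u = a] (mod p)" "[u' = a] (mod p)" using Pg_u_cong u u' unfolding M_def by blast+
  hence "[u = u'] (mod p)" by (meson cong_sym cong_trans)
  hence uu: "[u = u'] (mod M)" using teich_unique[of "m+1" u p u'] u u' p2 unfolding M_def by auto
  have "[t * u = t' * u] (mod M)"
    using u(2) u'(2) cong_mult[OF cong_refl[of t'] uu] by (meson cong_sym cong_trans)
  hence "[t * u * u^(p-2) = t' * u * u^(p-2)] (mod M)" using cong_mult cong_refl by blast
  moreover have "\<And>x. x * u * u^(p-2) = x * u^(p-1)" using p2
    by (metis mult.assoc power_Suc Suc_diff_Suc Suc_1 less_le_trans lessI numeral_2_eq_2 diff_Suc_Suc)
  ultimately have "[t * u^(p-1) = t' * u^(p-1)] (mod M)" by metis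
  moreover have "[t * u^(p-1) = t * 1] (mod M)" "[t' * u^(p-1) = t' * 1] (mod M)"
    using u by (intro cong_mult cong_refl; simp)+
  ultimately have "[t = t'] (mod M)" by (metis cong_sym cong_trans mult_1_right)
  thus ?thesis using u(4) u'(4) by (simp add: cong_def)
qed

lemma gproj_eq: "gproj p m a = (THE t. Pg p m a t)"
  unfolding gproj_def Pg_def by simp

lemma Pg_gproj:
  assumes "prime p" "\<not> p dvd a"
  shows "Pg p m a (gproj p m a)"
  unfolding gproj_eq using Pg_exists[OF assms] Pg_unique[OF assms(1)] by (metis theI)

lemma gproj_Pg:
  assumes "prime p" "Pg p m a t"
  shows "gproj p m a = t"
  unfolding gproj_eq using Pg_unique[OF assms(1)] assms(2) by blast

lemma Pg_compat:
  assumes "Pg p (Suc m) a t" "prime p"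
  shows "Pg p m (a mod p^(Suc m)) (t mod p^(Suc m))"
proof -
  obtain u where u: "[u ^ (p - 1) = 1] (mod p^(Suc m + 1))" "[t * u = a] (mod p^(Suc m + 1))" "t mod p = 1"
    using assms unfolding Pg_def by blast
  have d: "p^(m+1) dvd p^(Suc m + 1)" by (simp add: le_imp_power_dvd)
  have "[u ^ (p - 1) = 1] (mod p^(m+1))" using u(1) d cong_dvd_modulus_nat by blast
  moreover have "[(t mod p^(Suc m)) * u = a mod p^(Suc m)] (mod p^(m+1))"
    using cong_dvd_modulus_nat[OF u(2) d] by (simp add: cong_def mod_mult_left_eq)
  moreover have "(t mod p^(Suc m)) mod p = 1" using u(3) by (simp add: mod_mod_cancel)
  moreover have "p > 0" using assms(2) prime_gt_0_nat by blast
  ultimately show ?thesis unfolding Pg_def by auto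
qed

lemma Pg_inj:
  assumes "prime p" "Pg p m a t" "Pg p m a' t" "[a = a'] (mod p)"
  shows "[a = a'] (mod p^(m+1))"
proof -
  define M where "M = p ^ (m+1)"
  have p2: "p \<ge> 2" using assms prime_ge_2_nat by blast
  obtain u where u: "[u ^ (p - 1) = 1] (mod M)" "[t * u = a] (mod M)" "t mod p = 1"
    using assms(2) unfolding Pg_def M_def by blast
  obtain u' where u': "[u' ^ (p - 1) = 1] (mod M)" "[t * u' = a'] (mod M)"
    using assms(3) unfolding Pg_def M_def by blast
  have "[u = a] (mod p)" "[u' = a'] (mod p)" using Pg_u_cong u u' unfolding M_def by blast+
  hence "[u = u'] (mod p)" using assms(4) by (meson cong_sym cong_trans)
  hence uu: "[u = u'] (mod M)" using teich_unique[of "m+1" u p u'] u u' p2 unfolding M_def by auto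
  have "[t*u = t*u'] (mod M)" using uu by (intro cong_mult cong_refl)
  thus ?thesis using u u' unfolding M_def by (meson cong_sym cong_trans)
qed



lemma dpush_dv:
  "dpush (a,b,0,1) (dv Infty (Fin r)) = dv Infty (Fin (of_int a * r + of_int b))"
proof
  fix x
  have S: "{y. dv Infty (Fin r) y \<noteq> 0 \<and> moeb (a,b,0,1) y = x} =
        (if x = Infty then {Infty} else {}) \<union> (if x = Fin (of_int a * r + of_int b) then {Fin r} else {})"
    by (auto simp: dv_def)
  show "dpush (a,b,0,1) (dv Infty (Fin r)) x = dv Infty (Fin (of_int a * r + of_int b)) x"
    unfolding dpush_def S by (cases x) (auto simp: dv_def)
qed

lemma ev01_vact:
  "ev01 (vact g (a,b,0,d) f) = of_int a ^ g * Polynomial.coeff f 0"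
proof -
  have "ev01 (vact g (a,b,0,d) f) =
    (\<Sum>j\<le>g. Polynomial.coeff f j * ((0::'a)^j * of_int a ^ (g - j)))"
    unfolding ev01_def vact_def by (simp add: poly_sum)
  also have "\<dots> = (\<Sum>j\<in>{0}. Polynomial.coeff f j * ((0::'a)^j * of_int a ^ (g - j)))"
    by (intro sum.mono_neutral_right) (auto simp: zero_power)
  finally show ?thesis by simp
qed

lemma is_div0_dv: "is_div0 (dv Infty (Fin r))"
proof -
  have "{x. dv Infty (Fin r) x \<noteq> 0} = {Infty, Fin r}" by (auto simp: dv_def)
  thus ?thesis unfolding is_div0_def by (simp add: dv_def)
qed

lemma ev01_transl:
  assumes "modsym N g \<phi>"
  shows "ev01 (\<phi> (dv Infty (Fin (r + of_int k)))) = ev01 (\<phi> (dv Infty (Fin r)))"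
proof -
  have "(1,k,0,1) \<in> Gamma0 N" by (simp add: Gamma0_def)
  hence "vact g (1,k,0,1) (\<phi> (dpush (1,k,0,1) (dv Infty (Fin r)))) = \<phi> (dv Infty (Fin r))"
    using assms is_div0_dv unfolding modsym_def by blast
  hence "ev01 (\<phi> (dv Infty (Fin r))) = ev01 (vact g (1,k,0,1) (\<phi> (dv Infty (Fin (r + of_int k)))))"
    by (simp add: dpush_dv)
  also have "\<dots> = ev01 (\<phi> (dv Infty (Fin (r + of_int k))))"
    by (simp only: ev01_vact of_int_1 power_one mult_1) (simp add: ev01_def poly_0_coeff_0)
  finally show ?thesis by simp
qed

lemma vartheta_slash:
  fixes \<phi> :: "(cusp \<Rightarrow> int) \<Rightarrow> 'a::comm_ring_1 poly"
  assumes "modsym N g \<phi>" "prime p" "a < p^(n+1)" "coprime a (p^(n+1))"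
  shows "vartheta p (n+1) (mslash g (int p, 0, 0, 1) \<phi>) a = of_nat p ^ g * vartheta p n \<phi> (a mod p^n)"
proof -
  have p0: "p > 0" using assms prime_gt_0_nat by blast
  have e1: "of_int (int p) * (of_nat a / of_nat (p ^ (n+1))) + of_int 0 = (of_nat a / of_nat (p^n) :: rat)"
    using p0 by (simp add: field_simps)
  have "vartheta p (n+1) (mslash g (int p, 0, 0, 1) \<phi>) a =
      of_nat p ^ g * ev01 (\<phi> (dv Infty (Fin (of_nat a / of_nat (p^n)))))"
    using assms(3,4) unfolding vartheta_def mslash_def
    by (simp only: dpush_dv e1 if_True simp_thms) (simp only: ev01_vact of_int_of_nat_eq, simp only: ev01_def poly_0_coeff_0)
  also have "of_nat a / of_nat (p^n) = of_nat (a mod p^n) / of_nat (p^n) + (of_int (int (a div p^n)) :: rat)"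
  proof -
    have "(of_nat a :: rat) = of_nat (a mod p^n) + of_nat (p^n) * of_nat (a div p^n)"
      by (metis mod_mult_div_eq of_nat_add of_nat_mult add.commute)
    thus ?thesis using p0 by (simp add: field_simps)
  qed
  also have "ev01 (\<phi> (dv Infty (Fin (of_nat (a mod p^n) / of_nat (p^n) + of_int (int (a div p^n)))))) =
     ev01 (\<phi> (dv Infty (Fin (of_nat (a mod p^n) / of_nat (p^n)))))"
    by (rule ev01_transl[OF assms(1)])
  also have "\<dots> = vartheta p n \<phi> (a mod p^n)"
  proof -
    have "coprime a p" using assms(4) by simp
    hence "coprime a (p^n)" by simp
    hence "coprime (a mod p^n) (p^n)" using p0 coprime_mod_left_iff[of "p^n" a] by simp
    thus ?thesis unfolding vartheta_def using p0 by simp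
  qed
  finally show ?thesis .
qed



lemma cop_prime: "prime (p::nat) \<Longrightarrow> coprime a p \<longleftrightarrow> \<not> p dvd a"
  by (meson coprime_commute coprime_divisors coprime_self not_prime_unit prime_imp_coprime_nat)

theorem lemma2p6:
  fixes p N g n i :: nat
    and \<phi> :: "(cusp \<Rightarrow> int) \<Rightarrow> 'a::comm_ring_1 poly"
    and \<omega> :: "nat \<Rightarrow> 'a"
  assumes "prime p" and "odd p" and "N \<ge> 1"
    and "modsym N g \<phi>"
    and "teichmueller p \<omega>"
    and "n \<ge> 1" and "i \<le> p - 2"
  shows "theta p n i \<omega> (mslash g (int p, 0, 0, 1) \<phi>)
         = (\<lambda>t. of_nat p ^ g * nu p n (theta p (n - 1) i \<omega> \<phi>) t)"
proof
  fix t
  obtain m where n: "n = m + 1" using assms(6) by (metis le_add_diff_inverse2)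
  have pr: "prime p" by fact
  have p0: "p > 0" using pr prime_gt_0_nat by blast
  have pdvd: "p dvd p^(m+1)" by simp
  define A where "A = {a. a < p^(m+1+1) \<and> coprime a (p^(m+1+1)) \<and> gproj p (m+1) a = t}"
  define H where "H b = of_nat p ^ g * (vartheta p (m+1) \<phi> b * \<omega> (b mod p) ^ i)" for b
  have cA: "\<not> p dvd a" if "a \<in> A" for a
    using that pr cop_prime unfolding A_def by auto
  have "theta p n i \<omega> (mslash g (int p, 0, 0, 1) \<phi>) t =
      (\<Sum>a\<in>A. vartheta p (m+1+1) (mslash g (int p, 0, 0, 1) \<phi>) a * \<omega> (a mod p) ^ i)"
    unfolding theta_def A_def n ..
  also have "\<dots> = (\<Sum>a\<in>A. H (a mod p^(m+1)))"
  proof (rule sum.cong[OF refl])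
    fix a assume a: "a \<in> A"
    have "vartheta p (m+1+1) (mslash g (int p, 0, 0, 1) \<phi>) a = of_nat p ^ g * vartheta p (m+1) \<phi> (a mod p^(m+1))"
      using vartheta_slash[OF assms(4) pr] a unfolding A_def by blast
    moreover have "a mod p^(m+1) mod p = a mod p" using pdvd by (simp add: mod_mod_cancel)
    ultimately show "vartheta p (m+1+1) (mslash g (int p, 0, 0, 1) \<phi>) a * \<omega> (a mod p) ^ i = H (a mod p^(m+1))"
      unfolding H_def by (simp add: mult.assoc)
  qed
  also have "\<dots> = of_nat p ^ g * nu p n (theta p (n - 1) i \<omega> \<phi>) t"
  proof (cases "t < p^(m+1+1) \<and> t mod p = 1")
    case False
    have "A = {}"
    proof (rule ccontr)
      assume "A \<noteq> {}"
      then obtain a where a: "a \<in> A" by blast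
      have "Pg p (m+1) a (gproj p (m+1) a)" using Pg_gproj[OF pr cA[OF a]] .
      hence "Pg p (m+1) a t" using a unfolding A_def by simp
      thus False using False unfolding Pg_def by simp
    qed
    thus ?thesis using False unfolding nu_def n by auto
  next
    case True
    define B where "B = {b. b < p^(m+1) \<and> coprime b (p^(m+1)) \<and> gproj p m b = t mod p^(m+1)}"
    have Pt: "Pg p (m+1) a t" if "a \<in> A" for a
    proof -
      have "gproj p (m+1) a = t" using that unfolding A_def by blast
      thus ?thesis using Pg_gproj[OF pr cA[OF that], of "m+1"] by simp
    qed
    have bij: "bij_betw (\<lambda>a. a mod p^(m+1)) A B"
    proof (rule bij_betw_imageI)
      show "inj_on (\<lambda>a. a mod p^(m+1)) A"
      proof
        fix a a' assume a: "a \<in> A" and a': "a' \<in> A" and eq: "a mod p^(m+1) = a' mod p^(m+1)"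
        have "[a = a'] (mod p)" using eq pdvd cong_dvd_modulus_nat unfolding cong_def by blast
        hence "[a = a'] (mod p^(m+1+1))" using Pg_inj[OF pr Pt[OF a] Pt[OF a']] by blast
        thus "a = a'" using a a' unfolding A_def cong_def by simp
      qed
    next
      show "(\<lambda>a. a mod p^(m+1)) ` A = B"
      proof
        show "(\<lambda>a. a mod p^(m+1)) ` A \<subseteq> B"
        proof
          fix b assume "b \<in> (\<lambda>a. a mod p^(m+1)) ` A"
          then obtain a where a: "a \<in> A" and b: "b = a mod p^(m+1)" by blast
          have "b mod p = a mod p" using b pdvd by (simp add: mod_mod_cancel)
          hence "\<not> p dvd b" using cA[OF a] by (simp add: dvd_eq_mod_eq_0)
          hence "coprime b (p^(m+1))" using pr cop_prime by simp
          moreover have "gproj p m b = t mod p^(m+1)"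
            using gproj_Pg[OF pr Pg_compat[of p m a t]] Pt[OF a] pr b by simp
          moreover have "b < p^(m+1)" using b p0 by simp
          ultimately show "b \<in> B" unfolding B_def by simp
        qed
      next
        show "B \<subseteq> (\<lambda>a. a mod p^(m+1)) ` A"
        proof
          fix b assume b: "b \<in> B"
          hence nb: "\<not> p dvd b" using pr cop_prime unfolding B_def by auto
          define u where "u = b^(p^(m+1))"
          have u: "[u^(p-1) = 1] (mod p^(m+1+1))" "[u = b] (mod p)"
            using teich_exists[OF pr nb, of "m+1+1"] unfolding u_def by auto
          define a where "a = (t*u) mod p^(m+1+1)"
          have Pa: "Pg p (m+1) a t" unfolding Pg_def using True u
            by (auto simp: a_def cong_def)
          have "[a = t*u] (mod p)" unfolding a_def cong_def by (simp add: mod_mod_cancel)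
          moreover have "[t*u = 1*b] (mod p)" using True u
            by (intro cong_mult) (auto simp: cong_def)
          ultimately have ab: "[a = b] (mod p)" by (metis cong_trans mult_1)
          hence "\<not> p dvd a" using nb by (simp add: cong_def dvd_eq_mod_eq_0)
          hence "coprime a (p^(m+1+1))" using pr cop_prime by simp
          hence aA: "a \<in> A" unfolding A_def using gproj_Pg[OF pr Pa] p0 by (simp add: a_def)
          have P1: "Pg p m (a mod p^(m+1)) (t mod p^(m+1))"
            using Pg_compat[of p m a t] Pa pr by simp
          have P2: "Pg p m b (t mod p^(m+1))"
            using Pg_gproj[OF pr nb, of m] b unfolding B_def by simp
          have "[a mod p^(m+1) = b] (mod p)" using ab pdvd
            by (simp add: cong_def mod_mod_cancel)
          hence "[a mod p^(m+1) = b] (mod p^(m+1))" using Pg_inj[OF pr P1 P2] by blast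
          hence "a mod p^(m+1) = b" using b p0 unfolding B_def cong_def by simp
          thus "b \<in> (\<lambda>a. a mod p^(m+1)) ` A" using aA by blast
        qed
      qed
    qed
    have "(\<Sum>a\<in>A. H (a mod p^(m+1))) = (\<Sum>b\<in>B. H b)"
      by (rule sum.reindex_bij_betw[OF bij])
    also have "\<dots> = of_nat p ^ g * theta p m i \<omega> \<phi> (t mod p^(m+1))"
      unfolding H_def theta_def B_def by (simp add: sum_distrib_left)
    also have "\<dots> = of_nat p ^ g * nu p n (theta p (n - 1) i \<omega> \<phi>) t"
      using True unfolding nu_def n by simp
    finally show ?thesis .
  qed
  finally show "theta p n i \<omega> (mslash g (int p, 0, 0, 1) \<phi>) t = of_nat p ^ g * nu p n (theta p (n - 1) i \<omega> \<phi>) t" .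
qed

end
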